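(* Let $X$ be a shift space over $\mathcal{A}$, $N\ge0$ and $C\subseteq\mathcal{A}$, and assume that $\mathcal{E}_X(v)$ is acyclic for every $v\in\mathcal{L}(X)$ with $|v|<N$. Then the following are equivalent: (1) for every $v\in\mathcal{L}(X)$ with $|v|<N$ and all $a,b\in E^L_X(v)\cap C$, the vertices $a^L$ and $b^L$ are connected in $\mathcal{E}_X(v)$ by a path avoiding all vertices $c^L$ with $c\notin C$; (2) for every $n\le N$, the subgraph of $G^L_n(X)$ induced by the vertices in $C$ is connected; (3) the subgraph of $G^L_N(X)$ induced by the vertices in $C$ is connected. Symmetrically, the following are equivalent: (1') for every $v\in\mathcal{L}(X)$ with $|v|<N$ and all $a,b\in E^R_X(v)\cap C$, $a^R$ and $b^R$ are connected in $\mathcal{E}_X(v)$ by a path avoiding all vertices $c^R$ with $c\notin C$; (2') for every $n\le N$ the subgraph of $G^R_n(X)$ induced by $C$ is connected; (3') the subgraph of $G^R_N(X)$ induced by $C$ is connected.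
   Context: $X\subseteq\mathcal{A}^{\mathbb{Z}}$ is a shift space over a finite alphabet $\mathcal{A}$ with language $\mathcal{L}(X)$, $\mathcal{L}_n(X)$ its words of length $n$. For $v\in\mathcal{L}(X)$, $E^L_X(v)=\{a:av\in\mathcal{L}(X)\}$, $E^R_X(v)=\{b:vb\in\mathcal{L}(X)\}$, and $\mathcal{E}_X(v)$ is the bipartite graph whose vertices are the disjoint union of $\{a^L:a\in E^L_X(v)\}$ and $\{b^R:b\in E^R_X(v)\}$, with an edge $\{a^L,b^R\}$ whenever $avb\in\mathcal{L}(X)$. $G^L_n(X)$ (resp. $G^R_n(X)$) is the multigraph with labeled edges whose vertex set is $\mathcal{A}$ and which has, for each $v\in\mathcal{L}_n(X)$ and each pair of distinct $a,b\in E^L_X(v)$ (resp. $a,b\in E^R_X(v)$), an undirected edge labeled $v$ between $a$ and $b$. *)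

theory Defs
  imports Main
begin

text \<open>Shift spaces over a finite alphabet: the alphabet is the finite type 'a
 (so the alphabet is UNIV); configurations are functions int => 'a; words are lists.\<close>

definition factor :: "(int \<Rightarrow> 'a) \<Rightarrow> int \<Rightarrow> nat \<Rightarrow> 'a list" where
  "factor x i n = map (\<lambda>k. x (i + int k)) [0..<n]"

text \<open>A shift space is the set of configurations avoiding a set of forbidden words
 (equivalently: a closed shift-invariant subset of the full shift).\<close>
definition shift_space :: "(int \<Rightarrow> 'a::finite) set \<Rightarrow> bool" where
  "shift_space X \<longleftrightarrow> (\<exists>F :: 'a list set. X = {x. \<forall>i n. factor x i n \<notin> F})"

definition lang :: "(int \<Rightarrow> 'a) set \<Rightarrow> 'a list set" where
  "lang X = {w. \<exists>x\<in>X. \<exists>i. w = factor x i (length w)}"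

definition EL :: "(int \<Rightarrow> 'a) set \<Rightarrow> 'a list \<Rightarrow> 'a set" where
  "EL X v = {a. a # v \<in> lang X}"

definition ER :: "(int \<Rightarrow> 'a) set \<Rightarrow> 'a list \<Rightarrow> 'a set" where
  "ER X v = {b. v @ [b] \<in> lang X}"

text \<open>Extension graph: left vertices a^L are Inl a, right vertices b^R are Inr b.\<close>
definition ext_vertices :: "(int \<Rightarrow> 'a) set \<Rightarrow> 'a list \<Rightarrow> ('a + 'a) set" where
  "ext_vertices X v = Inl ` EL X v \<union> Inr ` ER X v"

definition ext_edge :: "(int \<Rightarrow> 'a) set \<Rightarrow> 'a list \<Rightarrow> ('a + 'a) \<Rightarrow> ('a + 'a) \<Rightarrow> bool" where
  "ext_edge X v p q \<longleftrightarrow>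
     (\<exists>a b. a # v @ [b] \<in> lang X \<and> ((p = Inl a \<and> q = Inr b) \<or> (p = Inr b \<and> q = Inl a)))"

definition is_cycle :: "'v set \<Rightarrow> ('v \<Rightarrow> 'v \<Rightarrow> bool) \<Rightarrow> 'v list \<Rightarrow> bool" where
  "is_cycle V E xs \<longleftrightarrow> length xs \<ge> 3 \<and> distinct xs \<and> set xs \<subseteq> V \<and>
     (\<forall>i. Suc i < length xs \<longrightarrow> E (xs ! i) (xs ! Suc i)) \<and> E (last xs) (hd xs)"

definition acyclic_graph :: "'v set \<Rightarrow> ('v \<Rightarrow> 'v \<Rightarrow> bool) \<Rightarrow> bool" where
  "acyclic_graph V E \<longleftrightarrow> \<not> (\<exists>xs. is_cycle V E xs)"

definition connected_within :: "'v set \<Rightarrow> ('v \<Rightarrow> 'v \<Rightarrow> bool) \<Rightarrow> 'v \<Rightarrow> 'v \<Rightarrow> bool" where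
  "connected_within W E p q \<longleftrightarrow> p \<in> W \<and> (\<lambda>x y. x \<in> W \<and> y \<in> W \<and> E x y)\<^sup>*\<^sup>* p q"

text \<open>Labelled edge multisets of G^L_n(X) and G^R_n(X): a triple (v, a, b) is an edge
 labelled v between a and b.\<close>
definition GL_edges :: "(int \<Rightarrow> 'a) set \<Rightarrow> nat \<Rightarrow> ('a list \<times> 'a \<times> 'a) set" where
  "GL_edges X n = {(v, a, b). v \<in> lang X \<and> length v = n \<and> a \<in> EL X v \<and> b \<in> EL X v \<and> a \<noteq> b}"

definition GR_edges :: "(int \<Rightarrow> 'a) set \<Rightarrow> nat \<Rightarrow> ('a list \<times> 'a \<times> 'a) set" where
  "GR_edges X n = {(v, a, b). v \<in> lang X \<and> length v = n \<and> a \<in> ER X v \<and> b \<in> ER X v \<and> a \<noteq> b}"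

text \<open>The subgraph induced by C of a multigraph on vertex set UNIV with labelled edge set Ed
 is connected (the empty graph counts as connected).\<close>
definition induced_connected :: "('l \<times> 'v \<times> 'v) set \<Rightarrow> 'v set \<Rightarrow> bool" where
  "induced_connected Ed C \<longleftrightarrow>
     (\<forall>a\<in>C. \<forall>b\<in>C. (\<lambda>x y. x \<in> C \<and> y \<in> C \<and> (\<exists>l. (l, x, y) \<in> Ed \<or> (l, y, x) \<in> Ed))\<^sup>*\<^sup>* a b)"

end

theory Submission
  imports Defs
begin


lemma lang_append:
  assumes "u @ w \<in> lang X" shows "u \<in> lang X" "w \<in> lang X"
proof -
  from assms obtain x i where x: "x \<in> X" and eq0: "u @ w = factor x i (length (u@w))"
    unfolding lang_def by blast
  define L where "L = length (u@w)"
  have eq: "u @ w = factor x i L" using eq0 unfolding L_def .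
  have Ll: "L = length u + length w" unfolding L_def by simp
  have "u = factor x i (length u)"
  proof (rule nth_equalityI)
    show "length u = length (factor x i (length u))" by (simp add: factor_def)
    fix k assume k: "k < length u"
    then have "u ! k = (u@w) ! k" by (simp add: nth_append)
    also have "\<dots> = factor x i L ! k" using eq by simp
    also have "\<dots> = x (i + int k)" using k Ll by (simp add: factor_def)
    finally show "u!k = factor x i (length u) ! k" using k by (simp add: factor_def)
  qed
  then show "u \<in> lang X" using x unfolding lang_def by blast
  have "w = factor x (i + int (length u)) (length w)"
  proof (rule nth_equalityI)
    show "length w = length (factor x (i + int (length u)) (length w))" by (simp add: factor_def)
    fix k assume k: "k < length w"
    then have "w ! k = (u@w) ! (length u + k)" by (simp add: nth_append)
    also have "\<dots> = factor x i L ! (length u + k)" using eq by simp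
    also have "\<dots> = x (i + int (length u + k))" using k Ll by (simp add: factor_def)
    finally show "w!k = factor x (i + int (length u)) (length w) ! k" using k by (simp add: factor_def add.assoc)
  qed
  then show "w \<in> lang X" using x unfolding lang_def by blast
qed

lemma rtranclp_sym': "R\<^sup>*\<^sup>* x y \<Longrightarrow> (\<And>a b. R a b \<Longrightarrow> R b a) \<Longrightarrow> R\<^sup>*\<^sup>* y x"
proof (induct rule: rtranclp_induct)
  case base then show ?case by simp
next
  case (step y z) then show ?case by (meson converse_rtranclp_into_rtranclp)
qed

lemma inv_rtranclp: "R\<^sup>*\<^sup>* x y \<Longrightarrow> (\<And>a b. R a b \<Longrightarrow> h a = h b) \<Longrightarrow> h x = h y"
  by (induct rule: rtranclp_induct) auto

lemma rtranclp_sub: "R\<^sup>*\<^sup>* x y \<Longrightarrow> (\<And>a b. R a b \<Longrightarrow> S\<^sup>*\<^sup>* a b) \<Longrightarrow> S\<^sup>*\<^sup>* x y"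
  by (induct rule: rtranclp_induct) (auto intro: rtranclp_trans)

definition dpath where
  "dpath E ys p q \<longleftrightarrow> ys \<noteq> [] \<and> hd ys = p \<and> last ys = q \<and> distinct ys \<and>
     (\<forall>i. Suc i < length ys \<longrightarrow> E (ys!i) (ys!Suc i))"

lemma dpath_exists: "E\<^sup>*\<^sup>* p q \<Longrightarrow> \<exists>ys. dpath E ys p q"
proof (induct rule: rtranclp_induct)
  case base then show ?case by (rule exI[of _ "[p]"]) (simp add: dpath_def)
next
  case (step b c)
  then obtain ys where ys: "dpath E ys p b" by blast
  show ?case
  proof (cases "c \<in> set ys")
    case True
    then obtain k where k: "k < length ys" "ys ! k = c" by (auto simp: in_set_conv_nth)
    have lt: "last (take (Suc k) ys) = ys ! k" using k by (simp add: take_Suc_conv_app_nth)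
    have "dpath E (take (Suc k) ys) p c"
      using ys k lt unfolding dpath_def
      by (auto simp: hd_conv_nth last_conv_nth min_def)
    then show ?thesis by blast
  next
    case False
    have "dpath E (ys @ [c]) p c"
      unfolding dpath_def
    proof (intro conjI allI impI)
      fix i assume i: "Suc i < length (ys @ [c])"
      show "E ((ys @ [c]) ! i) ((ys @ [c]) ! Suc i)"
      proof (cases "Suc i < length ys")
        case True then show ?thesis using ys by (simp add: nth_append dpath_def)
      next
        case False
        then have "i = length ys - 1" using i by simp
        then show ?thesis using ys step(2) by (auto simp: nth_append dpath_def last_conv_nth)
      qed
    qed (use ys False in \<open>auto simp: dpath_def\<close>)
    then show ?thesis by blast
  qed
qed

lemma cycle_from_path:
  assumes "E'\<^sup>*\<^sup>* p q" "p \<noteq> q"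
    "\<And>a b. E' a b \<Longrightarrow> E a b \<and> a \<noteq> z \<and> b \<noteq> z \<and> a \<in> V \<and> b \<in> V"
    "E q z" "E z p" "z \<in> V"
  shows "\<exists>xs. is_cycle V E xs"
proof -
  obtain ys where ys: "dpath E' ys p q" using dpath_exists[OF assms(1)] by blast
  have len: "length ys \<ge> 2"
  proof (rule ccontr)
    assume "\<not> ?thesis"
    then obtain a where "ys = [a]" using ys by (cases ys) (auto simp: dpath_def Suc_le_eq)
    with ys assms(2) show False by (auto simp: dpath_def)
  qed
  have el: "ys!i \<in> V \<and> ys!i \<noteq> z" if "i < length ys" for i
  proof (cases i)
    case 0
    with ys len have "E' (ys!0) (ys!Suc 0)" by (auto simp: dpath_def)
    with assms(3) 0 show ?thesis by blast
  next
    case (Suc j)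
    with ys that have "E' (ys!j) (ys!Suc j)" by (auto simp: dpath_def)
    with assms(3) Suc show ?thesis by blast
  qed
  have "is_cycle V E (ys @ [z])"
    unfolding is_cycle_def
  proof (intro conjI allI impI)
    show "3 \<le> length (ys @ [z])" using len by simp
    show "distinct (ys @ [z])" using ys el by (auto simp: dpath_def in_set_conv_nth)
    show "set (ys @ [z]) \<subseteq> V" using el assms(6) by (auto simp: in_set_conv_nth)
    show "E (last (ys @ [z])) (hd (ys @ [z]))" using ys assms(5) by (auto simp: dpath_def)
    fix i assume i: "Suc i < length (ys @ [z])"
    show "E ((ys @ [z]) ! i) ((ys @ [z]) ! Suc i)"
    proof (cases "Suc i < length ys")
      case True
      with ys assms(3) show ?thesis by (auto simp: dpath_def nth_append)
    next
      case False
      with i have "i = length ys - 1" by simp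
      with ys len assms(4) show ?thesis by (auto simp: dpath_def nth_append last_conv_nth)
    qed
  qed
  then show ?thesis by blast
qed



definition RL where
  "RL X C n S x y \<longleftrightarrow> x \<in> C \<and> y \<in> C \<and> (\<exists>w. length w = n \<and> w \<notin> S \<and> x \<in> EL X w \<and> y \<in> EL X w)"

lemma two_step: "R a g \<Longrightarrow> R g b \<Longrightarrow> R b g \<Longrightarrow> R g a \<Longrightarrow> R\<^sup>*\<^sup>* x a = R\<^sup>*\<^sup>* x b"
  by (meson rtranclp.rtrancl_into_rtrancl)

lemma EL_lang: "a \<in> EL X w \<Longrightarrow> w \<in> lang X"
  unfolding EL_def using lang_append(2)[of "[a]" w X] by simp

lemma RL_sym: "RL X C n S x y \<Longrightarrow> RL X C n S y x"
  unfolding RL_def by blast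

lemma ic_L: "induced_connected (GL_edges X n) C \<longleftrightarrow> (\<forall>a\<in>C. \<forall>b\<in>C. (RL X C n {})\<^sup>*\<^sup>* a b)"
proof -
  let ?G = "\<lambda>x y. x \<in> C \<and> y \<in> C \<and> (\<exists>l. (l, x, y) \<in> GL_edges X n \<or> (l, y, x) \<in> GL_edges X n)"
  have 1: "?G\<^sup>*\<^sup>* a b" if "(RL X C n {})\<^sup>*\<^sup>* a b" for a b
    using that
  proof (rule rtranclp_sub)
    fix x y assume "RL X C n {} x y"
    then obtain w where "x \<in> C" "y \<in> C" "length w = n" "x \<in> EL X w" "y \<in> EL X w"
      unfolding RL_def by blast
    then show "?G\<^sup>*\<^sup>* x y"
      by (cases "x = y") (auto simp: GL_edges_def intro!: r_into_rtranclp dest: EL_lang)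
  qed
  have 2: "(RL X C n {})\<^sup>*\<^sup>* a b" if "?G\<^sup>*\<^sup>* a b" for a b
    using that
  proof (rule rtranclp_sub)
    fix x y assume "?G x y"
    then show "(RL X C n {})\<^sup>*\<^sup>* x y"
      by (auto simp: GL_edges_def RL_def intro!: r_into_rtranclp)
  qed
  show ?thesis unfolding induced_connected_def using 1 2 by blast
qed

definition AL where
  "AL X C n \<longleftrightarrow> (\<forall>v x y. length v = n \<longrightarrow> x \<in> EL X v \<inter> C \<longrightarrow> y \<in> EL X v \<inter> C \<longrightarrow>
      (RL X C n {v})\<^sup>*\<^sup>* x y \<longrightarrow> x = y)"

lemma coreL:
  assumes A: "AL X C n" and lv: "length v = n"
    and x: "x \<in> EL X v \<inter> C" and y: "y \<in> EL X v \<inter> C"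
    and path: "(RL X C (Suc n) S)\<^sup>*\<^sup>* x y"
    and hyp: "\<And>c1 c2 g. c1 \<in> C \<Longrightarrow> c2 \<in> C \<Longrightarrow> c1 # v @ [g] \<in> lang X \<Longrightarrow> c2 # v @ [g] \<in> lang X
               \<Longrightarrow> v @ [g] \<notin> S \<Longrightarrow> P c1 = P c2"
    and Px: "P x"
  shows "P y"
proof -
  define h where "h c \<longleftrightarrow> (\<exists>k \<in> EL X v \<inter> C. (RL X C n {v})\<^sup>*\<^sup>* c k \<and> P k)" for c
  have key: "h c \<longleftrightarrow> P c" if c: "c \<in> EL X v \<inter> C" for c
  proof
    assume "h c"
    then obtain k where k: "k \<in> EL X v \<inter> C" "(RL X C n {v})\<^sup>*\<^sup>* c k" "P k" unfolding h_def by blast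
    with A lv c have "c = k" unfolding AL_def by blast
    with k show "P c" by simp
  next
    assume "P c" then show "h c" using c unfolding h_def by blast
  qed
  have inv: "h c1 = h c2" if e: "RL X C (Suc n) S c1 c2" for c1 c2
  proof -
    from e obtain w' where c: "c1 \<in> C" "c2 \<in> C" and w': "length w' = Suc n" "w' \<notin> S"
      "c1 \<in> EL X w'" "c2 \<in> EL X w'" unfolding RL_def by blast
    obtain w g where wg: "w' = w @ [g]" using w'(1) by (cases w' rule: rev_cases) auto
    have lw: "length w = n" using w'(1) wg by simp
    have l1: "c1 # w @ [g] \<in> lang X" "c2 # w @ [g] \<in> lang X" using w' wg unfolding EL_def by auto
    have e1: "c1 \<in> EL X w" "c2 \<in> EL X w"
      using lang_append(1)[of "c1 # w" "[g]"] lang_append(1)[of "c2 # w" "[g]"] l1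
      unfolding EL_def by auto
    show ?thesis
    proof (cases "w = v")
      case False
      then have r: "RL X C n {v} c1 c2" using c e1 lw unfolding RL_def by blast
      have "h c2" if "h c1" using that converse_rtranclp_into_rtranclp[of "RL X C n {v}", OF RL_sym[OF r]] unfolding h_def
        by blast
      moreover have "h c1" if "h c2" using that converse_rtranclp_into_rtranclp[of "RL X C n {v}", OF r] unfolding h_def
        by blast
      ultimately show ?thesis by blast
    next
      case True
      then have "P c1 = P c2" using hyp[OF c] l1 w' wg by auto
      moreover have "c1 \<in> EL X v \<inter> C" "c2 \<in> EL X v \<inter> C" using e1 c True by auto
      ultimately show ?thesis using key by blast
    qed
  qed
  have "h x" using key x Px by blast
  moreover have "h x = h y" using path inv by (rule inv_rtranclp)
  ultimately show "P y" using key y by blast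
qed

lemma ext_edge_V: "ext_edge X v p q \<Longrightarrow> p \<in> ext_vertices X v \<and> q \<in> ext_vertices X v"
proof -
  assume "ext_edge X v p q"
  then obtain a b where ab: "a # v @ [b] \<in> lang X" "(p = Inl a \<and> q = Inr b) \<or> (p = Inr b \<and> q = Inl a)"
    unfolding ext_edge_def by blast
  have "a \<in> EL X v" using lang_append(1)[of "a # v" "[b]"] ab(1) unfolding EL_def by auto
  moreover have "b \<in> ER X v" using lang_append(2)[of "[a]" "v @ [b]"] ab(1) unfolding ER_def by auto
  ultimately show ?thesis using ab(2) unfolding ext_vertices_def by auto
qed

lemma ext_edge_sym: "ext_edge X v p q \<Longrightarrow> ext_edge X v q p"
  unfolding ext_edge_def by blast

lemma AL_0: "AL X C 0"
proof -
  have "\<not> RL X C 0 {[]} a b" for a b unfolding RL_def by auto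
  then have "(RL X C 0 {[]})\<^sup>*\<^sup>* x y \<Longrightarrow> x = y" for x y
    by (metis converse_rtranclpE)
  then show ?thesis unfolding AL_def by auto
qed

lemma AL_Suc:
  assumes A: "AL X C n"
    and acyc: "\<forall>v\<in>lang X. length v = n \<longrightarrow> acyclic_graph (ext_vertices X v) (ext_edge X v)"
  shows "AL X C (Suc n)"
  unfolding AL_def
proof (intro allI impI, rule ccontr)
  fix v' x y
  assume lv': "length v' = Suc n" and x: "x \<in> EL X v' \<inter> C" and y: "y \<in> EL X v' \<inter> C"
    and p: "(RL X C (Suc n) {v'})\<^sup>*\<^sup>* x y" and ne: "x \<noteq> y"
  obtain v f where vf: "v' = v @ [f]" using lv' by (cases v' rule: rev_cases) auto
  have lv: "length v = n" using lv' vf by simp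
  have lx: "x # v @ [f] \<in> lang X" and ly: "y # v @ [f] \<in> lang X" using x y vf unfolding EL_def by auto
  have xv: "x \<in> EL X v \<inter> C" "y \<in> EL X v \<inter> C"
    using lang_append(1)[of "x # v" "[f]"] lang_append(1)[of "y # v" "[f]"] lx ly x y
    unfolding EL_def by auto
  have vL: "v \<in> lang X" using xv(1) by (auto intro: EL_lang)
  define Eo where "Eo p q \<longleftrightarrow> ext_edge X v p q \<and> p \<noteq> Inr f \<and> q \<noteq> Inr f" for p q
  have P1: "Eo\<^sup>*\<^sup>* (Inl x) (Inl y)"
  proof (rule coreL[OF A lv xv p, where P = "\<lambda>c. Eo\<^sup>*\<^sup>* (Inl x) (Inl c)"])
    fix c1 c2 g assume "c1 # v @ [g] \<in> lang X" "c2 # v @ [g] \<in> lang X" "v @ [g] \<notin> {v'}"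
    then have g: "g \<noteq> f" and e: "Eo (Inl c1) (Inr g)" "Eo (Inr g) (Inl c2)"
      using vf unfolding Eo_def ext_edge_def by auto
    have "Eo (Inr g) (Inl c1)" "Eo (Inl c2) (Inr g)" using e unfolding Eo_def by (auto intro: ext_edge_sym)
    with e show "Eo\<^sup>*\<^sup>* (Inl x) (Inl c1) = Eo\<^sup>*\<^sup>* (Inl x) (Inl c2)"
      by (intro two_step)
  qed simp
  have P4: "ext_edge X v (Inl y) (Inr f)" and P5: "ext_edge X v (Inr f) (Inl x)"
    using lx ly unfolding ext_edge_def by auto
  have P6: "Inr f \<in> ext_vertices X v" using P5 ext_edge_V by blast
  have P3: "Eo a b \<Longrightarrow> ext_edge X v a b \<and> a \<noteq> Inr f \<and> b \<noteq> Inr f \<and> a \<in> ext_vertices X v \<and> b \<in> ext_vertices X v" for a b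
    unfolding Eo_def using ext_edge_V[of X v a b] by blast
  have P2: "Inl x \<noteq> Inl y" using ne by simp
  have "\<exists>xs. is_cycle (ext_vertices X v) (ext_edge X v) xs"
    by (rule cycle_from_path[OF P1 P2 P3 P4 P5 P6])
  with acyc vL lv show False unfolding acyclic_graph_def by blast
qed

lemma AL_all:
  assumes acyc: "\<forall>v\<in>lang X. length v < N \<longrightarrow> acyclic_graph (ext_vertices X v) (ext_edge X v)"
  shows "n \<le> N \<Longrightarrow> AL X C n"
proof (induct n)
  case 0 show ?case by (rule AL_0)
next
  case (Suc n) then show ?case using AL_Suc[of X C n] acyc by auto
qed

lemma conv_L:
  assumes "(\<lambda>p q. p \<in> W \<and> q \<in> W \<and> ext_edge X w p q)\<^sup>*\<^sup>* (Inl a) q"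
    and W: "W = ext_vertices X w - {Inl c |c. c \<notin> C}" and a: "a \<in> C"
  shows "(\<forall>c. q = Inl c \<longrightarrow> (RL X C (Suc (length w)) {})\<^sup>*\<^sup>* a c) \<and>
         (\<forall>g. q = Inr g \<longrightarrow> (\<exists>c. c \<in> C \<and> c # w @ [g] \<in> lang X \<and> (RL X C (Suc (length w)) {})\<^sup>*\<^sup>* a c))"
  using assms(1)
proof (induct rule: rtranclp_induct)
  case base then show ?case by simp
next
  case (step q q')
  from step(2) obtain c g where e: "c # w @ [g] \<in> lang X" "q \<in> W" "q' \<in> W"
    "(q = Inl c \<and> q' = Inr g) \<or> (q = Inr g \<and> q' = Inl c)" unfolding ext_edge_def by blast
  from e(4) show ?case
  proof
    assume "q = Inl c \<and> q' = Inr g"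
    with step(3) e W show ?case by auto
  next
    assume qq: "q = Inr g \<and> q' = Inl c"
    with step(3) obtain c0 where c0: "c0 \<in> C" "c0 # w @ [g] \<in> lang X" "(RL X C (Suc (length w)) {})\<^sup>*\<^sup>* a c0" by auto
    have cC: "c \<in> C" using e(3) qq W by auto
    have "RL X C (Suc (length w)) {} c0 c"
      unfolding RL_def EL_def using c0 cC e(1) by (intro conjI exI[of _ "w @ [g]"]) auto
    with c0 qq show ?case by auto
  qed
qed

theorem left_part:
  fixes X :: "(int \<Rightarrow> 'a::finite) set" and N :: nat and C :: "'a set"
  assumes "\<forall>a. [a] \<in> lang X"
    and acyc: "\<forall>v\<in>lang X. length v < N \<longrightarrow> acyclic_graph (ext_vertices X v) (ext_edge X v)"
  shows "((\<forall>v\<in>lang X. length v < N \<longrightarrow> (\<forall>a\<in>EL X v \<inter> C. \<forall>b\<in>EL X v \<inter> C.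
              connected_within (ext_vertices X v - {Inl c |c. c \<notin> C}) (ext_edge X v) (Inl a) (Inl b)))
          \<longleftrightarrow> (\<forall>n\<le>N. induced_connected (GL_edges X n) C))
       \<and> ((\<forall>n\<le>N. induced_connected (GL_edges X n) C) \<longleftrightarrow> induced_connected (GL_edges X N) C)"
proof (intro conjI iffI)
  assume H: "\<forall>v\<in>lang X. length v < N \<longrightarrow> (\<forall>a\<in>EL X v \<inter> C. \<forall>b\<in>EL X v \<inter> C.
              connected_within (ext_vertices X v - {Inl c |c. c \<notin> C}) (ext_edge X v) (Inl a) (Inl b))"
  have "n \<le> N \<Longrightarrow> \<forall>a\<in>C. \<forall>b\<in>C. (RL X C n {})\<^sup>*\<^sup>* a b" for n
  proof (induct n)
    case 0
    have "RL X C 0 {} a b" if "a \<in> C" "b \<in> C" for a b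
      using that assms(1) unfolding RL_def EL_def by auto
    then show ?case by blast
  next
    case (Suc n)
    have "(RL X C (Suc n) {})\<^sup>*\<^sup>* a b" if "RL X C n {} a b" for a b
    proof -
      from that obtain w where w: "a \<in> C" "b \<in> C" "length w = n" "a \<in> EL X w" "b \<in> EL X w"
        unfolding RL_def by blast
      have "connected_within (ext_vertices X w - {Inl c |c. c \<notin> C}) (ext_edge X w) (Inl a) (Inl b)"
      proof -
        have wL: "w \<in> lang X" using w(4) by (rule EL_lang)
        have wN: "length w < N" using w(3) Suc(2) by simp
        show ?thesis using H[rule_format, OF wL wN] w(1,2,4,5) by blast
      qed
      then have "(\<lambda>p q. p \<in> ext_vertices X w - {Inl c |c. c \<notin> C} \<and> q \<in> ext_vertices X w - {Inl c |c. c \<notin> C} \<and> ext_edge X w p q)\<^sup>*\<^sup>* (Inl a) (Inl b)"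
        unfolding connected_within_def by (rule conjunct2)
      from conv_L[OF this refl w(1)] have "(RL X C (Suc (length w)) {})\<^sup>*\<^sup>* a b" by blast
      then show ?thesis using w(3) by simp
    qed
    moreover have "\<forall>a\<in>C. \<forall>b\<in>C. (RL X C n {})\<^sup>*\<^sup>* a b" using Suc by simp
    ultimately show ?case using rtranclp_sub[of "RL X C n {}" _ _ "RL X C (Suc n) {}"] by blast
  qed
  then show "\<forall>n\<le>N. induced_connected (GL_edges X n) C" by (simp add: ic_L)
next
  assume H: "\<forall>n\<le>N. induced_connected (GL_edges X n) C"
  show "\<forall>v\<in>lang X. length v < N \<longrightarrow> (\<forall>a\<in>EL X v \<inter> C. \<forall>b\<in>EL X v \<inter> C.
              connected_within (ext_vertices X v - {Inl c |c. c \<notin> C}) (ext_edge X v) (Inl a) (Inl b))"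
  proof (intro ballI impI)
    fix v a b assume v: "v \<in> lang X" "length v < N" and a: "a \<in> EL X v \<inter> C" and b: "b \<in> EL X v \<inter> C"
    define W where "W = ext_vertices X v - {Inl c |c. c \<notin> C}"
    define Ew where "Ew p q \<longleftrightarrow> p \<in> W \<and> q \<in> W \<and> ext_edge X v p q" for p q
    have A: "AL X C (length v)" using AL_all[OF acyc] v by simp
    have p: "(RL X C (Suc (length v)) {})\<^sup>*\<^sup>* a b"
      using H v(2) a b by (auto simp: ic_L)
    have "Ew\<^sup>*\<^sup>* (Inl a) (Inl b)"
    proof (rule coreL[OF A refl a b p, where P = "\<lambda>c. Ew\<^sup>*\<^sup>* (Inl a) (Inl c)"])
      fix c1 c2 g assume c: "c1 \<in> C" "c2 \<in> C" and l: "c1 # v @ [g] \<in> lang X" "c2 # v @ [g] \<in> lang X"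
      have "ext_edge X v (Inl c1) (Inr g)" "ext_edge X v (Inl c2) (Inr g)"
        using l unfolding ext_edge_def by auto
      then have e: "Ew (Inl c1) (Inr g)" "Ew (Inl c2) (Inr g)"
        using c unfolding Ew_def W_def by (auto dest: ext_edge_V)
      then have "Ew (Inr g) (Inl c1)" "Ew (Inr g) (Inl c2)" unfolding Ew_def by (auto intro: ext_edge_sym)
      with e show "Ew\<^sup>*\<^sup>* (Inl a) (Inl c1) = Ew\<^sup>*\<^sup>* (Inl a) (Inl c2)"
        by (intro two_step)
    qed simp
    moreover have "Inl a \<in> W" using a unfolding W_def ext_vertices_def by auto
    ultimately show "connected_within W (ext_edge X v) (Inl a) (Inl b)"
      unfolding connected_within_def Ew_def by auto
  qed
next
  assume "\<forall>n\<le>N. induced_connected (GL_edges X n) C"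
  then show "induced_connected (GL_edges X N) C" by simp
next
  assume H: "induced_connected (GL_edges X N) C"
  have down: "RL X C n {} a b" if "RL X C (Suc n) {} a b" for n a b
  proof -
    from that obtain w' where w': "a \<in> C" "b \<in> C" "length w' = Suc n" "a \<in> EL X w'" "b \<in> EL X w'"
      unfolding RL_def by blast
    obtain w g where wg: "w' = w @ [g]" using w'(3) by (cases w' rule: rev_cases) auto
    have "a \<in> EL X w" "b \<in> EL X w"
      using lang_append(1)[of "a # w" "[g]"] lang_append(1)[of "b # w" "[g]"] w'(4,5) wg
      unfolding EL_def by auto
    then show ?thesis using w' wg unfolding RL_def by auto
  qed
  have "induced_connected (GL_edges X m) C \<Longrightarrow> n \<le> m \<Longrightarrow> induced_connected (GL_edges X n) C" for m n
  proof (induct m)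
    case 0 then show ?case by simp
  next
    case (Suc m)
    show ?case
    proof (cases "n = Suc m")
      case True with Suc show ?thesis by simp
    next
      case False
      have "(RL X C m {})\<^sup>*\<^sup>* a b" if "(RL X C (Suc m) {})\<^sup>*\<^sup>* a b" for a b
        using that by (rule rtranclp_sub) (rule r_into_rtranclp, rule down)
      then have "induced_connected (GL_edges X m) C"
        using Suc(2) unfolding ic_L by blast
      with Suc False show ?thesis by simp
    qed
  qed
  with H show "\<forall>n\<le>N. induced_connected (GL_edges X n) C" by blast
qed



definition RR where
  "RR X C n S x y \<longleftrightarrow> x \<in> C \<and> y \<in> C \<and> (\<exists>w. length w = n \<and> w \<notin> S \<and> x \<in> ER X w \<and> y \<in> ER X w)"

lemma ER_lang: "a \<in> ER X w \<Longrightarrow> w \<in> lang X"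
  unfolding ER_def using lang_append(1)[of w "[a]" X] by simp

lemma RR_sym: "RR X C n S x y \<Longrightarrow> RR X C n S y x"
  unfolding RR_def by blast

lemma ic_R: "induced_connected (GR_edges X n) C \<longleftrightarrow> (\<forall>a\<in>C. \<forall>b\<in>C. (RR X C n {})\<^sup>*\<^sup>* a b)"
proof -
  let ?G = "\<lambda>x y. x \<in> C \<and> y \<in> C \<and> (\<exists>l. (l, x, y) \<in> GR_edges X n \<or> (l, y, x) \<in> GR_edges X n)"
  have 1: "?G\<^sup>*\<^sup>* a b" if "(RR X C n {})\<^sup>*\<^sup>* a b" for a b
    using that
  proof (rule rtranclp_sub)
    fix x y assume "RR X C n {} x y"
    then obtain w where "x \<in> C" "y \<in> C" "length w = n" "x \<in> ER X w" "y \<in> ER X w"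
      unfolding RR_def by blast
    then show "?G\<^sup>*\<^sup>* x y"
      by (cases "x = y") (auto simp: GR_edges_def intro!: r_into_rtranclp dest: ER_lang)
  qed
  have 2: "(RR X C n {})\<^sup>*\<^sup>* a b" if "?G\<^sup>*\<^sup>* a b" for a b
    using that
  proof (rule rtranclp_sub)
    fix x y assume "?G x y"
    then show "(RR X C n {})\<^sup>*\<^sup>* x y"
      by (auto simp: GR_edges_def RR_def intro!: r_into_rtranclp)
  qed
  show ?thesis unfolding induced_connected_def using 1 2 by blast
qed

definition AR where
  "AR X C n \<longleftrightarrow> (\<forall>v x y. length v = n \<longrightarrow> x \<in> ER X v \<inter> C \<longrightarrow> y \<in> ER X v \<inter> C \<longrightarrow>
      (RR X C n {v})\<^sup>*\<^sup>* x y \<longrightarrow> x = y)"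

lemma coreR:
  assumes A: "AR X C n" and lv: "length v = n"
    and x: "x \<in> ER X v \<inter> C" and y: "y \<in> ER X v \<inter> C"
    and path: "(RR X C (Suc n) S)\<^sup>*\<^sup>* x y"
    and hyp: "\<And>c1 c2 g. c1 \<in> C \<Longrightarrow> c2 \<in> C \<Longrightarrow> g # v @ [c1] \<in> lang X \<Longrightarrow> g # v @ [c2] \<in> lang X
               \<Longrightarrow> g # v \<notin> S \<Longrightarrow> P c1 = P c2"
    and Px: "P x"
  shows "P y"
proof -
  define h where "h c \<longleftrightarrow> (\<exists>k \<in> ER X v \<inter> C. (RR X C n {v})\<^sup>*\<^sup>* c k \<and> P k)" for c
  have key: "h c \<longleftrightarrow> P c" if c: "c \<in> ER X v \<inter> C" for c
  proof
    assume "h c"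
    then obtain k where k: "k \<in> ER X v \<inter> C" "(RR X C n {v})\<^sup>*\<^sup>* c k" "P k" unfolding h_def by blast
    with A lv c have "c = k" unfolding AR_def by blast
    with k show "P c" by simp
  next
    assume "P c" then show "h c" using c unfolding h_def by blast
  qed
  have inv: "h c1 = h c2" if e: "RR X C (Suc n) S c1 c2" for c1 c2
  proof -
    from e obtain w' where c: "c1 \<in> C" "c2 \<in> C" and w': "length w' = Suc n" "w' \<notin> S"
      "c1 \<in> ER X w'" "c2 \<in> ER X w'" unfolding RR_def by blast
    obtain w g where wg: "w' = g # w" using w'(1) by (cases w') auto
    have lw: "length w = n" using w'(1) wg by simp
    have l1: "g # w @ [c1] \<in> lang X" "g # w @ [c2] \<in> lang X" using w' wg unfolding ER_def by auto
    have e1: "c1 \<in> ER X w" "c2 \<in> ER X w"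
      using lang_append(2)[of "[g]" "w @ [c1]"] lang_append(2)[of "[g]" "w @ [c2]"] l1
      unfolding ER_def by auto
    show ?thesis
    proof (cases "w = v")
      case False
      then have r: "RR X C n {v} c1 c2" using c e1 lw unfolding RR_def by blast
      have "h c2" if "h c1" using that converse_rtranclp_into_rtranclp[of "RR X C n {v}", OF RR_sym[OF r]] unfolding h_def
        by blast
      moreover have "h c1" if "h c2" using that converse_rtranclp_into_rtranclp[of "RR X C n {v}", OF r] unfolding h_def
        by blast
      ultimately show ?thesis by blast
    next
      case True
      then have "P c1 = P c2" using hyp[OF c] l1 w' wg by auto
      moreover have "c1 \<in> ER X v \<inter> C" "c2 \<in> ER X v \<inter> C" using e1 c True by auto
      ultimately show ?thesis using key by blast
    qed
  qed
  have "h x" using key x Px by blast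
  moreover have "h x = h y" using path inv by (rule inv_rtranclp)
  ultimately show "P y" using key y by blast
qed

lemma AR_0: "AR X C 0"
proof -
  have "\<not> RR X C 0 {[]} a b" for a b unfolding RR_def by auto
  then have "(RR X C 0 {[]})\<^sup>*\<^sup>* x y \<Longrightarrow> x = y" for x y
    by (metis converse_rtranclpE)
  then show ?thesis unfolding AR_def by auto
qed

lemma AR_Suc:
  assumes A: "AR X C n"
    and acyc: "\<forall>v\<in>lang X. length v = n \<longrightarrow> acyclic_graph (ext_vertices X v) (ext_edge X v)"
  shows "AR X C (Suc n)"
  unfolding AR_def
proof (intro allI impI, rule ccontr)
  fix v' x y
  assume lv': "length v' = Suc n" and x: "x \<in> ER X v' \<inter> C" and y: "y \<in> ER X v' \<inter> C"
    and p: "(RR X C (Suc n) {v'})\<^sup>*\<^sup>* x y" and ne: "x \<noteq> y"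
  obtain v f where vf: "v' = f # v" using lv' by (cases v') auto
  have lv: "length v = n" using lv' vf by simp
  have lx: "f # v @ [x] \<in> lang X" and ly: "f # v @ [y] \<in> lang X" using x y vf unfolding ER_def by auto
  have xv: "x \<in> ER X v \<inter> C" "y \<in> ER X v \<inter> C"
    using lang_append(2)[of "[f]" "v @ [x]"] lang_append(2)[of "[f]" "v @ [y]"] lx ly x y
    unfolding ER_def by auto
  have vL: "v \<in> lang X" using xv(1) by (auto intro: ER_lang)
  define Eo where "Eo p q \<longleftrightarrow> ext_edge X v p q \<and> p \<noteq> Inl f \<and> q \<noteq> Inl f" for p q
  have P1: "Eo\<^sup>*\<^sup>* (Inr x) (Inr y)"
  proof (rule coreR[OF A lv xv p, where P = "\<lambda>c. Eo\<^sup>*\<^sup>* (Inr x) (Inr c)"])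
    fix c1 c2 g assume "g # v @ [c1] \<in> lang X" "g # v @ [c2] \<in> lang X" "g # v \<notin> {v'}"
    then have g: "g \<noteq> f" and e: "Eo (Inr c1) (Inl g)" "Eo (Inl g) (Inr c2)"
      using vf unfolding Eo_def ext_edge_def by auto
    have "Eo (Inl g) (Inr c1)" "Eo (Inr c2) (Inl g)" using e unfolding Eo_def by (auto intro: ext_edge_sym)
    with e show "Eo\<^sup>*\<^sup>* (Inr x) (Inr c1) = Eo\<^sup>*\<^sup>* (Inr x) (Inr c2)"
      by (intro two_step)
  qed simp
  have P4: "ext_edge X v (Inr y) (Inl f)" and P5: "ext_edge X v (Inl f) (Inr x)"
    using lx ly unfolding ext_edge_def by auto
  have P6: "Inl f \<in> ext_vertices X v" using P5 ext_edge_V by blast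
  have P3: "Eo a b \<Longrightarrow> ext_edge X v a b \<and> a \<noteq> Inl f \<and> b \<noteq> Inl f \<and> a \<in> ext_vertices X v \<and> b \<in> ext_vertices X v" for a b
    unfolding Eo_def using ext_edge_V[of X v a b] by blast
  have P2: "Inr x \<noteq> Inr y" using ne by simp
  have "\<exists>xs. is_cycle (ext_vertices X v) (ext_edge X v) xs"
    by (rule cycle_from_path[OF P1 P2 P3 P4 P5 P6])
  with acyc vL lv show False unfolding acyclic_graph_def by blast
qed

lemma AR_all:
  assumes acyc: "\<forall>v\<in>lang X. length v < N \<longrightarrow> acyclic_graph (ext_vertices X v) (ext_edge X v)"
  shows "n \<le> N \<Longrightarrow> AR X C n"
proof (induct n)
  case 0 show ?case by (rule AR_0)
next
  case (Suc n) then show ?case using AR_Suc[of X C n] acyc by auto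
qed

lemma conv_R:
  assumes "(\<lambda>p q. p \<in> W \<and> q \<in> W \<and> ext_edge X w p q)\<^sup>*\<^sup>* (Inr a) q"
    and W: "W = ext_vertices X w - {Inr c |c. c \<notin> C}" and a: "a \<in> C"
  shows "(\<forall>c. q = Inr c \<longrightarrow> (RR X C (Suc (length w)) {})\<^sup>*\<^sup>* a c) \<and>
         (\<forall>g. q = Inl g \<longrightarrow> (\<exists>c. c \<in> C \<and> g # w @ [c] \<in> lang X \<and> (RR X C (Suc (length w)) {})\<^sup>*\<^sup>* a c))"
  using assms(1)
proof (induct rule: rtranclp_induct)
  case base then show ?case by simp
next
  case (step q q')
  from step(2) obtain c g where e: "g # w @ [c] \<in> lang X" "q \<in> W" "q' \<in> W"
    "(q = Inr c \<and> q' = Inl g) \<or> (q = Inl g \<and> q' = Inr c)" unfolding ext_edge_def by blast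
  from e(4) show ?case
  proof
    assume "q = Inr c \<and> q' = Inl g"
    with step(3) e W show ?case by auto
  next
    assume qq: "q = Inl g \<and> q' = Inr c"
    with step(3) obtain c0 where c0: "c0 \<in> C" "g # w @ [c0] \<in> lang X" "(RR X C (Suc (length w)) {})\<^sup>*\<^sup>* a c0" by auto
    have cC: "c \<in> C" using e(3) qq W by auto
    have "RR X C (Suc (length w)) {} c0 c"
      unfolding RR_def ER_def using c0 cC e(1) by (intro conjI exI[of _ "g # w"]) auto
    with c0 qq show ?case by auto
  qed
qed

theorem right_part:
  fixes X :: "(int \<Rightarrow> 'a::finite) set" and N :: nat and C :: "'a set"
  assumes "\<forall>a. [a] \<in> lang X"
    and acyc: "\<forall>v\<in>lang X. length v < N \<longrightarrow> acyclic_graph (ext_vertices X v) (ext_edge X v)"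
  shows "((\<forall>v\<in>lang X. length v < N \<longrightarrow> (\<forall>a\<in>ER X v \<inter> C. \<forall>b\<in>ER X v \<inter> C.
              connected_within (ext_vertices X v - {Inr c |c. c \<notin> C}) (ext_edge X v) (Inr a) (Inr b)))
          \<longleftrightarrow> (\<forall>n\<le>N. induced_connected (GR_edges X n) C))
       \<and> ((\<forall>n\<le>N. induced_connected (GR_edges X n) C) \<longleftrightarrow> induced_connected (GR_edges X N) C)"
proof (intro conjI iffI)
  assume H: "\<forall>v\<in>lang X. length v < N \<longrightarrow> (\<forall>a\<in>ER X v \<inter> C. \<forall>b\<in>ER X v \<inter> C.
              connected_within (ext_vertices X v - {Inr c |c. c \<notin> C}) (ext_edge X v) (Inr a) (Inr b))"
  have "n \<le> N \<Longrightarrow> \<forall>a\<in>C. \<forall>b\<in>C. (RR X C n {})\<^sup>*\<^sup>* a b" for n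
  proof (induct n)
    case 0
    have "RR X C 0 {} a b" if "a \<in> C" "b \<in> C" for a b
      using that assms(1) unfolding RR_def ER_def by auto
    then show ?case by blast
  next
    case (Suc n)
    have "(RR X C (Suc n) {})\<^sup>*\<^sup>* a b" if "RR X C n {} a b" for a b
    proof -
      from that obtain w where w: "a \<in> C" "b \<in> C" "length w = n" "a \<in> ER X w" "b \<in> ER X w"
        unfolding RR_def by blast
      have "connected_within (ext_vertices X w - {Inr c |c. c \<notin> C}) (ext_edge X w) (Inr a) (Inr b)"
      proof -
        have wL: "w \<in> lang X" using w(4) by (rule ER_lang)
        have wN: "length w < N" using w(3) Suc(2) by simp
        show ?thesis using H[rule_format, OF wL wN] w(1,2,4,5) by blast
      qed
      then have "(\<lambda>p q. p \<in> ext_vertices X w - {Inr c |c. c \<notin> C} \<and> q \<in> ext_vertices X w - {Inr c |c. c \<notin> C} \<and> ext_edge X w p q)\<^sup>*\<^sup>* (Inr a) (Inr b)"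
        unfolding connected_within_def by (rule conjunct2)
      from conv_R[OF this refl w(1)] have "(RR X C (Suc (length w)) {})\<^sup>*\<^sup>* a b" by blast
      then show ?thesis using w(3) by simp
    qed
    moreover have "\<forall>a\<in>C. \<forall>b\<in>C. (RR X C n {})\<^sup>*\<^sup>* a b" using Suc by simp
    ultimately show ?case using rtranclp_sub[of "RR X C n {}" _ _ "RR X C (Suc n) {}"] by blast
  qed
  then show "\<forall>n\<le>N. induced_connected (GR_edges X n) C" by (simp add: ic_R)
next
  assume H: "\<forall>n\<le>N. induced_connected (GR_edges X n) C"
  show "\<forall>v\<in>lang X. length v < N \<longrightarrow> (\<forall>a\<in>ER X v \<inter> C. \<forall>b\<in>ER X v \<inter> C.
              connected_within (ext_vertices X v - {Inr c |c. c \<notin> C}) (ext_edge X v) (Inr a) (Inr b))"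
  proof (intro ballI impI)
    fix v a b assume v: "v \<in> lang X" "length v < N" and a: "a \<in> ER X v \<inter> C" and b: "b \<in> ER X v \<inter> C"
    define W where "W = ext_vertices X v - {Inr c |c. c \<notin> C}"
    define Ew where "Ew p q \<longleftrightarrow> p \<in> W \<and> q \<in> W \<and> ext_edge X v p q" for p q
    have A: "AR X C (length v)" using AR_all[OF acyc] v by simp
    have p: "(RR X C (Suc (length v)) {})\<^sup>*\<^sup>* a b"
      using H v(2) a b by (auto simp: ic_R)
    have "Ew\<^sup>*\<^sup>* (Inr a) (Inr b)"
    proof (rule coreR[OF A refl a b p, where P = "\<lambda>c. Ew\<^sup>*\<^sup>* (Inr a) (Inr c)"])
      fix c1 c2 g assume c: "c1 \<in> C" "c2 \<in> C" and l: "g # v @ [c1] \<in> lang X" "g # v @ [c2] \<in> lang X"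
      have "ext_edge X v (Inr c1) (Inl g)" "ext_edge X v (Inr c2) (Inl g)"
        using l unfolding ext_edge_def by auto
      then have e: "Ew (Inr c1) (Inl g)" "Ew (Inr c2) (Inl g)"
        using c unfolding Ew_def W_def by (auto dest: ext_edge_V)
      then have "Ew (Inl g) (Inr c1)" "Ew (Inl g) (Inr c2)" unfolding Ew_def by (auto intro: ext_edge_sym)
      with e show "Ew\<^sup>*\<^sup>* (Inr a) (Inr c1) = Ew\<^sup>*\<^sup>* (Inr a) (Inr c2)"
        by (intro two_step)
    qed simp
    moreover have "Inr a \<in> W" using a unfolding W_def ext_vertices_def by auto
    ultimately show "connected_within W (ext_edge X v) (Inr a) (Inr b)"
      unfolding connected_within_def Ew_def by auto
  qed
next
  assume "\<forall>n\<le>N. induced_connected (GR_edges X n) C"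
  then show "induced_connected (GR_edges X N) C" by simp
next
  assume H: "induced_connected (GR_edges X N) C"
  have down: "RR X C n {} a b" if "RR X C (Suc n) {} a b" for n a b
  proof -
    from that obtain w' where w': "a \<in> C" "b \<in> C" "length w' = Suc n" "a \<in> ER X w'" "b \<in> ER X w'"
      unfolding RR_def by blast
    obtain w g where wg: "w' = g # w" using w'(3) by (cases w') auto
    have "a \<in> ER X w" "b \<in> ER X w"
      using lang_append(2)[of "[g]" "w @ [a]"] lang_append(2)[of "[g]" "w @ [b]"] w'(4,5) wg
      unfolding ER_def by auto
    then show ?thesis using w' wg unfolding RR_def by auto
  qed
  have "induced_connected (GR_edges X m) C \<Longrightarrow> n \<le> m \<Longrightarrow> induced_connected (GR_edges X n) C" for m n
  proof (induct m)
    case 0 then show ?case by simp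
  next
    case (Suc m)
    show ?case
    proof (cases "n = Suc m")
      case True with Suc show ?thesis by simp
    next
      case False
      have "(RR X C m {})\<^sup>*\<^sup>* a b" if "(RR X C (Suc m) {})\<^sup>*\<^sup>* a b" for a b
        using that by (rule rtranclp_sub) (rule r_into_rtranclp, rule down)
      then have "induced_connected (GR_edges X m) C"
        using Suc(2) unfolding ic_R by blast
      with Suc False show ?thesis by simp
    qed
  qed
  with H show "\<forall>n\<le>N. induced_connected (GR_edges X n) C" by blast
qed

theorem mainTheorem6:
  fixes X :: "(int \<Rightarrow> 'a::finite) set" and N :: nat and C :: "'a set"
  assumes "shift_space X"
    and "\<forall>a. [a] \<in> lang X"
    and "\<forall>v\<in>lang X. length v < N \<longrightarrow> acyclic_graph (ext_vertices X v) (ext_edge X v)"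
  shows "((\<forall>v\<in>lang X. length v < N \<longrightarrow> (\<forall>a\<in>EL X v \<inter> C. \<forall>b\<in>EL X v \<inter> C.
              connected_within (ext_vertices X v - {Inl c |c. c \<notin> C}) (ext_edge X v) (Inl a) (Inl b)))
          \<longleftrightarrow> (\<forall>n\<le>N. induced_connected (GL_edges X n) C))
       \<and> ((\<forall>n\<le>N. induced_connected (GL_edges X n) C) \<longleftrightarrow> induced_connected (GL_edges X N) C)
       \<and> ((\<forall>v\<in>lang X. length v < N \<longrightarrow> (\<forall>a\<in>ER X v \<inter> C. \<forall>b\<in>ER X v \<inter> C.
              connected_within (ext_vertices X v - {Inr c |c. c \<notin> C}) (ext_edge X v) (Inr a) (Inr b)))
          \<longleftrightarrow> (\<forall>n\<le>N. induced_connected (GR_edges X n) C))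
       \<and> ((\<forall>n\<le>N. induced_connected (GR_edges X n) C) \<longleftrightarrow> induced_connected (GR_edges X N) C)"
    using left_part[OF assms(2) assms(3), of C] right_part[OF assms(2) assms(3), of C] by blast

end
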